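(* Let $K\ge 1$ be an integer, let $h_1,\dots,h_K>0$, $\sigma^2>0$ and $P>0$ be real numbers. For $g\in\mathbb{R}$ and $b=(b_1,\dots,b_K)\in\mathbb{R}^K$ define $$\mathsf{MSE}(g,b)=\sum_{k=1}^{K}(g h_k b_k-1)^2+\sigma^2 g^2 .$$ Consider the problem of minimizing $\mathsf{MSE}(g,b)$ over $g\in\mathbb{R}$, $b\in\mathbb{R}^K$ subject to $\sum_{k=1}^K b_k^2\le P$. Set $\beta_k=\dfrac{P h_k}{\sigma^2+P h_k^2}$ for $k=1,\dots,K$. Then the minimum value of this problem equals $$\mathsf{MSE}^\star=\sum_{k=1}^{K}\frac{\sigma^2}{\sigma^2+P h_k^2},$$ and it is attained at $$g^\star=\sqrt{\frac{1}{P}\sum_{k=1}^{K}\beta_k^2},\qquad b_k^\star=\beta_k\sqrt{\frac{P}{\sum_{j=1}^{K}\beta_j^2}},\quad k=1,\dots,K.$$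
   Context: This models an over-the-air computation system with $K$ single-antenna sensors: $h_k$ is the (magnitude of the) channel coefficient of sensor $k$, $b_k$ its transmit scaling factor, $g$ the receiver scaling factor, $\sigma^2$ the receiver noise variance, and $P$ a sum-power limit. All variables are taken real (phases having been aligned), with $h_k>0$. *)

theory Defs
  imports Complex_Main
begin

definition mse :: "nat \<Rightarrow> (nat \<Rightarrow> real) \<Rightarrow> real \<Rightarrow> real \<Rightarrow> (nat \<Rightarrow> real) \<Rightarrow> real" where
  "mse K h \<sigma>2 g b = (\<Sum>k=1..K. (g * h k * b k - 1)^2) + \<sigma>2 * g^2"

end

theory Submission
  imports Defs
begin

lemma term_lb:
  fixes h s P c :: real
  assumes "s > 0" "P > 0"
  shows "s / (s + P * h^2) \<le> (h * c - 1)^2 + (s / P) * c^2"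
proof -
  define D where "D = s + P * h^2"
  have D: "D > 0" using assms unfolding D_def by (simp add: add_pos_nonneg)
  have e1: "P * D * ((h * c - 1)^2 + (s / P) * c^2 - s / D) = P * D * (h * c - 1)^2 + D * s * c^2 - P * s"
    using D assms by (simp add: field_simps)
  have e2: "P * D * ((D / P) * (c - P * h / D)^2) = (D * c - P * h)^2"
    using D assms by (simp add: field_simps power2_eq_square)
  have e3: "P * D * (h * c - 1)^2 + D * s * c^2 - P * s = (D * c - P * h)^2"
    unfolding D_def by (simp add: power2_eq_square algebra_simps)
  have eq: "(h * c - 1)^2 + (s / P) * c^2 - s / D = (D / P) * (c - P * h / D)^2"
    using e1 e2 e3 D assms by (metis mult_cancel_left mult_pos_pos less_irrefl)
  have "(D / P) * (c - P * h / D)^2 \<ge> 0" using D assms by simp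
  thus ?thesis using eq unfolding D_def by linarith
qed

lemma term_eq:
  fixes h s P :: real
  assumes "s > 0" "P > 0"
  shows "(h * (P * h / (s + P * h^2)) - 1)^2 + s * (P * h / (s + P * h^2))^2 / P = s / (s + P * h^2)"
proof -
  have D: "s + P * h^2 > 0" using assms by (simp add: add_pos_nonneg)
  define D where "D = s + P * h^2"
  have Dp: "D > 0" using D D_def by simp
  have a: "h * (P * h / D) - 1 = - (s / D)" using Dp unfolding D_def by (simp add: field_simps power2_eq_square)
  have b: "s * (P * h / D)^2 / P = s * (P * h^2) / D^2" using Dp assms by (simp add: field_simps power2_eq_square)
  have "(h * (P * h / D) - 1)^2 + s * (P * h / D)^2 / P = s * D / D^2"
  proof -
    have "(- (s / D))^2 = s * s / D^2" by (simp add: power_divide power2_eq_square)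
    moreover have "s * s / D^2 + s * (P * h^2) / D^2 = (s * s + s * (P * h^2)) / D^2"
      by (simp add: add_divide_distrib)
    moreover have "s * s + s * (P * h^2) = s * D" unfolding D_def by (simp add: algebra_simps)
    ultimately show ?thesis unfolding a b by simp
  qed
  also have "\<dots> = s / D" using Dp by (simp add: power2_eq_square)
  finally show ?thesis unfolding D_def .
qed

theorem theorem1:
  fixes K :: nat and h :: "nat \<Rightarrow> real" and \<sigma>2 P :: real
  assumes "K \<ge> 1" and "\<And>k. k \<in> {1..K} \<Longrightarrow> h k > 0" and "\<sigma>2 > 0" and "P > 0"
  defines "\<beta> \<equiv> (\<lambda>k. P * h k / (\<sigma>2 + P * (h k)^2))"
  defines "MSEopt \<equiv> (\<Sum>k=1..K. \<sigma>2 / (\<sigma>2 + P * (h k)^2))"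
  defines "gopt \<equiv> sqrt ((1 / P) * (\<Sum>k=1..K. (\<beta> k)^2))"
  defines "bopt \<equiv> (\<lambda>k. \<beta> k * sqrt (P / (\<Sum>j=1..K. (\<beta> j)^2)))"
  shows "(\<forall>g b. (\<Sum>k=1..K. (b k)^2) \<le> P \<longrightarrow> MSEopt \<le> mse K h \<sigma>2 g b)
         \<and> (\<Sum>k=1..K. (bopt k)^2) \<le> P
         \<and> mse K h \<sigma>2 gopt bopt = MSEopt"
proof -
  define S where "S = (\<Sum>j=1..K. (\<beta> j)^2)"
  have b1: "\<beta> 1 > 0" using assms(1) assms(2)[of 1] assms(3,4) unfolding \<beta>_def
    by (simp add: add_pos_nonneg)
  have "(\<beta> 1)^2 \<le> S" unfolding S_def
    by (rule member_le_sum) (use assms(1) in auto)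
  hence S: "S > 0" using b1 by (smt (verit) zero_less_power)
  have P1: "\<forall>g b. (\<Sum>k=1..K. (b k)^2) \<le> P \<longrightarrow> MSEopt \<le> mse K h \<sigma>2 g b"
  proof (intro allI impI)
    fix g and b :: "nat \<Rightarrow> real"
    assume hb: "(\<Sum>k=1..K. (b k)^2) \<le> P"
    have "MSEopt \<le> (\<Sum>k=1..K. (h k * (g * b k) - 1)^2 + (\<sigma>2 / P) * (g * b k)^2)"
      unfolding MSEopt_def by (rule sum_mono) (rule term_lb[OF assms(3,4)])
    also have "\<dots> = (\<Sum>k=1..K. (g * h k * b k - 1)^2) + (\<sigma>2 / P) * g^2 * (\<Sum>k=1..K. (b k)^2)"
      by (simp add: sum.distrib sum_distrib_left power_mult_distrib algebra_simps)
    also have "\<dots> \<le> (\<Sum>k=1..K. (g * h k * b k - 1)^2) + (\<sigma>2 / P) * g^2 * P"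
      using hb assms(3,4) by (intro add_left_mono mult_left_mono) auto
    also have "\<dots> = mse K h \<sigma>2 g b" unfolding mse_def using assms(4) by simp
    finally show "MSEopt \<le> mse K h \<sigma>2 g b" .
  qed
  have sq: "(sqrt (P / S))^2 = P / S" using S assms(4) by simp
  have P2: "(\<Sum>k=1..K. (bopt k)^2) = P"
    unfolding bopt_def power_mult_distrib sq sum_distrib_right[symmetric] S_def[symmetric]
    using S by simp
  have gb: "gopt * bopt k = \<beta> k" for k
  proof -
    have "gopt * bopt k = \<beta> k * (sqrt (S / P) * sqrt (P / S))"
      unfolding gopt_def bopt_def S_def by simp
    also have "sqrt (S / P) * sqrt (P / S) = 1"
      using S assms(4) by (simp add: real_sqrt_mult[symmetric])
    finally show ?thesis by simp
  qed
  have "gopt = sqrt (S / P)" unfolding gopt_def S_def by simp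
  hence g2: "gopt^2 = S / P" using S assms(4) by simp
  have "mse K h \<sigma>2 gopt bopt = (\<Sum>k=1..K. (h k * \<beta> k - 1)^2) + \<sigma>2 * S / P"
  proof -
    have e: "gopt * h k * bopt k = h k * \<beta> k" for k using gb[of k] by (simp add: algebra_simps)
    show ?thesis unfolding mse_def g2 e by simp
  qed
  also have "\<dots> = (\<Sum>k=1..K. (h k * \<beta> k - 1)^2 + \<sigma>2 * (\<beta> k)^2 / P)"
    unfolding S_def by (simp add: sum.distrib sum_distrib_left sum_divide_distrib)
  also have "\<dots> = MSEopt" unfolding MSEopt_def \<beta>_def
    by (rule sum.cong) (use term_eq[OF assms(3,4)] in auto)
  finally show ?thesis using P1 P2 by simp
qed

end
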